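(* Let $\alpha,\beta>0$, $\tau>0$, and let $\{S_{\alpha,\beta}^n\}_{n\in\mathbb{N}_0}\subset\mathcal{B}(X)$ be a discrete $(\alpha,\beta)$-resolvent family generated by a closed linear operator $A$ on a Banach space $X$ (so that $\tau^{-\alpha}\in\rho(A)$). Let $R_\tau:=\tau^{-\alpha}(\tau^{-\alpha}-A)^{-1}$. Then for every $x\in X$, $$S_{\alpha,\beta}^0x=a_{0,1}R_\tau x,\qquad S_{\alpha,\beta}^1x=a_{1,1}R_\tau x+a_{1,2}R_\tau^2 x,$$ and for every $n\geq 2$, $$S_{\alpha,\beta}^nx=\sum_{j=1}^{n+1}a_{n,j}R_\tau^j x,$$ where the scalars $a_{n,l}$ are defined as follows (writing $k(\cdot)$ for $k^\alpha_\tau(\cdot)$): $a_{0,1}:=k_\tau^\beta(0)$, $a_{1,1}:=\big(k_\tau^\beta(1)k(0)-k_\tau^\beta(0)k(1)\big)k(0)^{-1}$, $a_{1,2}:=k_\tau^\beta(0)k(1)k(0)^{-1}$, and for $n\geq 2$: $a_{n,n+1}:=k(1)a_{n-1,n}k(0)^{-1}$; $a_{n,1}:=\Big(k_\tau^\beta(n)k(0)-\sum_{j=0}^{n-1}k(n-j)a_{j,1}\Big)k(0)^{-1}$; $a_{n,l}:=\Big(\sum_{j=l-2}^{n-1}k(n-j)a_{j,l-1}-\sum_{j=l-1}^{n-1}k(n-j)a_{j,l}\Big)k(0)^{-1}$ for $2\leq l\leq n$.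
   Context: Fix a step size $\tau>0$. For $\gamma>0$ and $n\in\mathbb{N}_0$ let $k_\tau^\gamma(n):=\frac{\tau^{\gamma-1}\Gamma(\gamma+n)}{\Gamma(\gamma)\Gamma(n+1)}$ (so $k^\alpha_\tau(0)=\tau^{\alpha-1}\neq 0$). For $\alpha,\beta>0$, a sequence $\{S_{\alpha,\beta}^n\}_{n\in\mathbb{N}_0}\subset\mathcal{B}(X)$ is called a discrete $(\alpha,\beta)$-resolvent family generated by the closed operator $A:D(A)\subset X\to X$ if (1) $S^n_{\alpha,\beta}x\in D(A)$ for all $x\in X$, $n\in\mathbb N_0$, and $AS_{\alpha,\beta}^nx=S_{\alpha,\beta}^nAx$ for all $x\in D(A)$, $n\in\mathbb{N}_0$; (2) for every $x\in X$ and $n\in\mathbb{N}_0$, $S_{\alpha,\beta}^nx=k^\beta_\tau(n)x+\tau A\sum_{j=0}^n k^\alpha_\tau(n-j)S_{\alpha,\beta}^jx$. *)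

theory Defs
  imports "HOL-Analysis.Analysis"
begin

definition kk :: "real \<Rightarrow> real \<Rightarrow> nat \<Rightarrow> real" where
  "kk \<tau> \<gamma> n = \<tau> powr (\<gamma> - 1) * Gamma (\<gamma> + real n) / (Gamma \<gamma> * Gamma (real n + 1))"

text \<open>Closed linear operator \<open>A\<close> with domain \<open>D\<close> (values of \<open>A\<close> outside \<open>D\<close> are irrelevant).\<close>
definition closed_lin_op :: "'a::real_normed_vector set \<Rightarrow> ('a \<Rightarrow> 'a) \<Rightarrow> bool" where
  "closed_lin_op D A \<longleftrightarrow> subspace D \<and>
     (\<forall>x\<in>D. \<forall>y\<in>D. A (x + y) = A x + A y) \<and>
     (\<forall>c. \<forall>x\<in>D. A (c *\<^sub>R x) = c *\<^sub>R A x) \<and>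
     closed {(x, A x) | x. x \<in> D}"

definition discrete_resolvent_family ::
  "real \<Rightarrow> real \<Rightarrow> real \<Rightarrow> 'a::real_normed_vector set \<Rightarrow> ('a \<Rightarrow> 'a) \<Rightarrow> (nat \<Rightarrow> 'a \<Rightarrow> 'a) \<Rightarrow> bool" where
  "discrete_resolvent_family \<tau> \<alpha> \<beta> D A S \<longleftrightarrow>
     (\<forall>n. bounded_linear (S n)) \<and>
     (\<forall>n x. S n x \<in> D) \<and>
     (\<forall>n. \<forall>x\<in>D. A (S n x) = S n (A x)) \<and>
     (\<forall>n x. S n x = kk \<tau> \<beta> n *\<^sub>R x + \<tau> *\<^sub>R A (\<Sum>j=0..n. kk \<tau> \<alpha> (n - j) *\<^sub>R S j x))"

definition is_inverse_of_shift :: "'a::real_normed_vector set \<Rightarrow> ('a \<Rightarrow> 'a) \<Rightarrow> real \<Rightarrow> ('a \<Rightarrow> 'a) \<Rightarrow> bool" where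
  "is_inverse_of_shift D A c R \<longleftrightarrow> bounded_linear R \<and>
     (\<forall>x. R x \<in> D \<and> c *\<^sub>R R x - A (R x) = x) \<and>
     (\<forall>y\<in>D. R (c *\<^sub>R y - A y) = y)"

definition in_resolvent_set :: "'a::real_normed_vector set \<Rightarrow> ('a \<Rightarrow> 'a) \<Rightarrow> real \<Rightarrow> bool" where
  "in_resolvent_set D A c \<longleftrightarrow> (\<exists>R. is_inverse_of_shift D A c R)"

definition resolvent_op :: "'a::real_normed_vector set \<Rightarrow> ('a \<Rightarrow> 'a) \<Rightarrow> real \<Rightarrow> 'a \<Rightarrow> 'a" where
  "resolvent_op D A c = (THE R. is_inverse_of_shift D A c R)"

definition R_tau :: "real \<Rightarrow> real \<Rightarrow> 'a::real_normed_vector set \<Rightarrow> ('a \<Rightarrow> 'a) \<Rightarrow> 'a \<Rightarrow> 'a" where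
  "R_tau \<tau> \<alpha> D A = (\<lambda>x. (\<tau> powr (-\<alpha>)) *\<^sub>R resolvent_op D A (\<tau> powr (-\<alpha>)) x)"

declare sum.cong[fundef_cong]

text \<open>The coefficients \<open>a_{n,l}\<close> (set to 0 outside the range \<open>1 \<le> l \<le> n+1\<close>, where they are never used).\<close>
fun acoef :: "real \<Rightarrow> real \<Rightarrow> real \<Rightarrow> nat \<Rightarrow> nat \<Rightarrow> real" where
  "acoef \<tau> \<alpha> \<beta> n l =
    (if n = 0 then (if l = 1 then kk \<tau> \<beta> 0 else 0)
     else if n = 1 then
       (if l = 1 then (kk \<tau> \<beta> 1 * kk \<tau> \<alpha> 0 - kk \<tau> \<beta> 0 * kk \<tau> \<alpha> 1) / kk \<tau> \<alpha> 0
        else if l = 2 then kk \<tau> \<beta> 0 * kk \<tau> \<alpha> 1 / kk \<tau> \<alpha> 0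
        else 0)
     else
       (if l = n + 1 then kk \<tau> \<alpha> 1 * acoef \<tau> \<alpha> \<beta> (n - 1) n / kk \<tau> \<alpha> 0
        else if l = 1 then
          (kk \<tau> \<beta> n * kk \<tau> \<alpha> 0 - (\<Sum>j=0..n-1. kk \<tau> \<alpha> (n - j) * acoef \<tau> \<alpha> \<beta> j 1)) / kk \<tau> \<alpha> 0
        else if 2 \<le> l \<and> l \<le> n then
          ((\<Sum>j=l-2..n-1. kk \<tau> \<alpha> (n - j) * acoef \<tau> \<alpha> \<beta> j (l - 1))
           - (\<Sum>j=l-1..n-1. kk \<tau> \<alpha> (n - j) * acoef \<tau> \<alpha> \<beta> j l)) / kk \<tau> \<alpha> 0
        else 0))"

end

theory Submission imports Defs begin

declare acoef.simps[simp del]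

lemma acoef_zero:
  assumes "l = 0 \<or> j + 1 < l"
  shows "acoef \<tau> \<alpha> \<beta> j l = 0"
  using assms by (subst acoef.simps) auto

lemma acoef0: "acoef \<tau> \<alpha> \<beta> 0 l = (if l = 1 then kk \<tau> \<beta> 0 else 0)"
  by (subst acoef.simps) auto

lemma coef:
  assumes k0: "kk \<tau> \<alpha> 0 \<noteq> 0"
  shows "acoef \<tau> \<alpha> \<beta> n l = (if l = 1 then kk \<tau> \<beta> n else 0)
     + (\<Sum>j<n. kk \<tau> \<alpha> (n-j) / kk \<tau> \<alpha> 0 *
          ((if l = 0 then 0 else acoef \<tau> \<alpha> \<beta> j (l-1)) - acoef \<tau> \<alpha> \<beta> j l))"
proof -
  let ?f = "acoef \<tau> \<alpha> \<beta>" and ?k = "kk \<tau> \<alpha>" and ?kb = "kk \<tau> \<beta>"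
  consider "n = 0" | "n = 1" | "n \<ge> 2" by linarith
  then show ?thesis
  proof cases
    case 1 then show ?thesis by (simp add: acoef0)
  next
    case 2
    have e: "?f 1 l = (if l = 1 then (?kb 1 * ?k 0 - ?kb 0 * ?k 1) / ?k 0
        else if l = 2 then ?kb 0 * ?k 1 / ?k 0 else 0)"
      by (subst acoef.simps) simp
    have s: "{..<1::nat} = {0}" by auto
    show ?thesis using k0 unfolding 2 e s
      by (auto simp: acoef0 field_simps)
  next
    case 3
    note n2 = this
    consider "l = 0" | "l = 1" | "2 \<le> l \<and> l \<le> n" | "l = n + 1" | "l > n + 1" by linarith
    then show ?thesis
    proof cases
      case 1 then show ?thesis using n2 by (simp add: acoef_zero)
    next
      case 2
      have e: "?f n 1 = (?kb n * ?k 0 - (\<Sum>j=0..n-1. ?k (n - j) * ?f j 1)) / ?k 0"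
        using n2 by (subst acoef.simps) simp
      have s: "{0..n-1} = {..<n}" using n2 by auto
      show ?thesis using k0 unfolding 2 e s
        by (simp add: acoef_zero field_simps sum_divide_distrib sum_subtractf sum_distrib_left sum_negf)
    next
      case 4
      have e: "?f n (n+1) = ?k 1 * ?f (n - 1) n / ?k 0"
        using n2 by (subst acoef.simps) simp
      obtain m where m: "n = Suc m" using n2 by (cases n) auto
      have z: "(\<Sum>j<m. ?k (n-j) / ?k 0 * (?f j n - ?f j (n+1))) = 0"
        by (rule sum.neutral) (auto simp: acoef_zero m)
      have sm: "(\<Sum>j<n. ?k (n-j) / ?k 0 * (?f j n - ?f j (n+1))) = ?k 1 / ?k 0 * ?f (n-1) n"
        unfolding m lessThan_Suc using z[unfolded m] by (simp add: acoef_zero)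
      show ?thesis unfolding 4 e using n2 sm by simp
    next
      case 5
      have z: "(\<Sum>j<n. ?k (n-j) / ?k 0 * ((if l = 0 then 0 else ?f j (l-1)) - ?f j l)) = 0"
        by (rule sum.neutral) (use 5 in \<open>auto simp: acoef_zero\<close>)
      show ?thesis using 5 by (simp add: z acoef_zero)
    next
      case 3
      have e: "?f n l = ((\<Sum>j=l-2..n-1. ?k (n - j) * ?f j (l - 1))
           - (\<Sum>j=l-1..n-1. ?k (n - j) * ?f j l)) / ?k 0"
        using n2 3 by (subst acoef.simps) simp
      have s1: "(\<Sum>j=l-2..n-1. ?k (n - j) * ?f j (l - 1)) = (\<Sum>j<n. ?k (n - j) * ?f j (l - 1))"
        by (rule sum.mono_neutral_left) (use n2 3 in \<open>auto simp: acoef_zero\<close>)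
      have s2: "(\<Sum>j=l-1..n-1. ?k (n - j) * ?f j l) = (\<Sum>j<n. ?k (n - j) * ?f j l)"
        by (rule sum.mono_neutral_left) (use n2 3 in \<open>auto simp: acoef_zero\<close>)
      have r: "(\<Sum>j<n. ?k (n-j) / ?k 0 * ((if l = 0 then 0 else ?f j (l-1)) - ?f j l))
          = ((\<Sum>j<n. ?k (n - j) * ?f j (l - 1)) - (\<Sum>j<n. ?k (n - j) * ?f j l)) / ?k 0"
        unfolding diff_divide_distrib sum_divide_distrib sum_subtractf[symmetric]
        by (rule sum.cong) (use 3 k0 in \<open>auto simp: field_simps\<close>)
      show ?thesis using 3 unfolding e s1 s2 r by simp
    qed
  qed
qed

lemma A_zero:
  assumes "closed_lin_op D A" shows "A 0 = 0"
proof -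
  have sub: "subspace D" and sc: "\<forall>c. \<forall>x\<in>D. A (c *\<^sub>R x) = c *\<^sub>R A x"
    using assms unfolding closed_lin_op_def by (meson, meson)
  have "0 \<in> D" using sub by (rule subspace_0)
  then have "A (0 *\<^sub>R 0) = 0 *\<^sub>R A 0" using sc by blast
  then show ?thesis by simp
qed

lemma A_sum:
  assumes "closed_lin_op D A" "finite I" "\<And>i. i \<in> I \<Longrightarrow> v i \<in> D"
  shows "A (sum v I) = (\<Sum>i\<in>I. A (v i))"
  using assms(2,3)
proof (induction I rule: finite_induct)
  case empty then show ?case using A_zero[OF assms(1)] by simp
next
  case (insert x F)
  have sub: "subspace D" using assms(1) unfolding closed_lin_op_def by blast
  have "sum v F \<in> D" using insert by (intro subspace_sum[OF sub]) auto
  moreover have "v x \<in> D" using insert by auto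
  ultimately have "A (v x + sum v F) = A (v x) + A (sum v F)"
    using assms(1) unfolding closed_lin_op_def by blast
  then show ?case using insert by simp
qed

lemma inv_unique:
  assumes "is_inverse_of_shift D A c R1" "is_inverse_of_shift D A c R2"
  shows "R2 = R1"
proof
  fix x
  have "R2 x \<in> D" "c *\<^sub>R R2 x - A (R2 x) = x" using assms(2) unfolding is_inverse_of_shift_def by auto
  moreover have "\<forall>y\<in>D. R1 (c *\<^sub>R y - A y) = y" using assms(1) unfolding is_inverse_of_shift_def by auto
  ultimately show "R2 x = R1 x" by metis
qed

theorem theorem3p11:
  fixes \<tau> \<alpha> \<beta> :: real
    and D :: "'a::banach set" and A :: "'a \<Rightarrow> 'a" and S :: "nat \<Rightarrow> 'a \<Rightarrow> 'a"
  assumes "\<alpha> > 0" and "\<beta> > 0" and "\<tau> > 0"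
    and "closed_lin_op D A"
    and "discrete_resolvent_family \<tau> \<alpha> \<beta> D A S"
  shows "in_resolvent_set D A (\<tau> powr (-\<alpha>))
    \<and> (\<forall>x. S 0 x = acoef \<tau> \<alpha> \<beta> 0 1 *\<^sub>R R_tau \<tau> \<alpha> D A x)
    \<and> (\<forall>x. S 1 x = acoef \<tau> \<alpha> \<beta> 1 1 *\<^sub>R R_tau \<tau> \<alpha> D A x
                 + acoef \<tau> \<alpha> \<beta> 1 2 *\<^sub>R (R_tau \<tau> \<alpha> D A ^^ 2) x)
    \<and> (\<forall>n x. n \<ge> 2 \<longrightarrow>
          S n x = (\<Sum>j=1..n+1. acoef \<tau> \<alpha> \<beta> n j *\<^sub>R (R_tau \<tau> \<alpha> D A ^^ j) x))"
proof -
  have sub: "subspace D" and Aadd: "\<And>x y. x \<in> D \<Longrightarrow> y \<in> D \<Longrightarrow> A (x + y) = A x + A y"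
    and Ascal: "\<And>r x. x \<in> D \<Longrightarrow> A (r *\<^sub>R x) = r *\<^sub>R A x"
    using assms(4) unfolding closed_lin_op_def by blast+
  have bl: "\<And>n. bounded_linear (S n)" and inD: "\<And>n x. S n x \<in> D"
    and comm: "\<And>n x. x \<in> D \<Longrightarrow> A (S n x) = S n (A x)"
    and eq: "\<And>n x. S n x = kk \<tau> \<beta> n *\<^sub>R x + \<tau> *\<^sub>R A (\<Sum>j=0..n. kk \<tau> \<alpha> (n - j) *\<^sub>R S j x)"
    using assms(5) unfolding discrete_resolvent_family_def by blast+
  have lin: "\<And>n. linear (S n)" using bl bounded_linear.linear by blast
  define c where "c = \<tau> powr (-\<alpha>)"
  have k0: "kk \<tau> \<alpha> 0 = \<tau> powr (\<alpha> - 1)" using Gamma_real_pos[OF assms(1)] by (simp add: kk_def)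
  have kb0: "kk \<tau> \<beta> 0 = \<tau> powr (\<beta> - 1)" using Gamma_real_pos[OF assms(2)] by (simp add: kk_def)
  have cpos: "c > 0" using assms(3) by (simp add: c_def)
  have k0pos: "kk \<tau> \<alpha> 0 > 0" using assms(3) k0 by simp
  have kb0pos: "kk \<tau> \<beta> 0 > 0" using assms(3) kb0 by simp
  have ck: "\<tau> * c * kk \<tau> \<alpha> 0 = 1"
    unfolding c_def k0 using assms(3) by (simp add: powr_minus powr_diff field_simps)
  have step: "c *\<^sub>R S n x - A (S n x)
      = c *\<^sub>R (kk \<tau> \<beta> n *\<^sub>R x + \<tau> *\<^sub>R (\<Sum>j<n. kk \<tau> \<alpha> (n-j) *\<^sub>R A (S j x)))" for n x
  proof -
    have sD: "\<And>j. kk \<tau> \<alpha> (n-j) *\<^sub>R S j x \<in> D" using inD sub by (simp add: subspace_scale)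
    have "A (\<Sum>j=0..n. kk \<tau> \<alpha> (n-j) *\<^sub>R S j x) = (\<Sum>j=0..n. A (kk \<tau> \<alpha> (n-j) *\<^sub>R S j x))"
      by (rule A_sum[OF assms(4)]) (simp_all add: sD)
    also have "\<dots> = (\<Sum>j=0..n. kk \<tau> \<alpha> (n-j) *\<^sub>R A (S j x))" using Ascal inD by simp
    also have "\<dots> = (\<Sum>j<n. kk \<tau> \<alpha> (n-j) *\<^sub>R A (S j x)) + kk \<tau> \<alpha> 0 *\<^sub>R A (S n x)"
      by (simp add: atLeast0AtMost lessThan_Suc_atMost[symmetric])
    finally have e: "S n x = kk \<tau> \<beta> n *\<^sub>R x + \<tau> *\<^sub>R ((\<Sum>j<n. kk \<tau> \<alpha> (n-j) *\<^sub>R A (S j x)) + kk \<tau> \<alpha> 0 *\<^sub>R A (S n x))"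
      using eq[of n x] by simp
    have "c *\<^sub>R S n x = c *\<^sub>R (kk \<tau> \<beta> n *\<^sub>R x + \<tau> *\<^sub>R (\<Sum>j<n. kk \<tau> \<alpha> (n-j) *\<^sub>R A (S j x)))
        + (\<tau> * c * kk \<tau> \<alpha> 0) *\<^sub>R A (S n x)"
      by (subst e) (simp add: scaleR_add_right algebra_simps)
    then show ?thesis using ck by simp
  qed
  define R0 where "R0 = (\<lambda>x. (1 / (c * kk \<tau> \<beta> 0)) *\<^sub>R S 0 x)"
  have S0: "c *\<^sub>R S 0 x - A (S 0 x) = (c * kk \<tau> \<beta> 0) *\<^sub>R x" for x
    using step[of 0 x] by simp
  have inv0: "is_inverse_of_shift D A c R0"
    unfolding is_inverse_of_shift_def
  proof (intro conjI allI ballI)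
    show "bounded_linear R0" unfolding R0_def by (rule bounded_linear_const_scaleR[OF bl])
  next
    fix x
    show "R0 x \<in> D" unfolding R0_def using inD sub by (simp add: subspace_scale)
    have "c *\<^sub>R R0 x - A (R0 x) = (1 / (c * kk \<tau> \<beta> 0)) *\<^sub>R (c *\<^sub>R S 0 x - A (S 0 x))"
      unfolding R0_def using Ascal inD by (simp add: algebra_simps)
    also have "\<dots> = x" using S0 cpos kb0pos by simp
    finally show "c *\<^sub>R R0 x - A (R0 x) = x" .
  next
    fix y assume y: "y \<in> D"
    have "R0 (c *\<^sub>R y - A y) = (1 / (c * kk \<tau> \<beta> 0)) *\<^sub>R (c *\<^sub>R S 0 y - S 0 (A y))"
      unfolding R0_def using lin[of 0] by (simp add: linear_diff linear_scale)
    also have "\<dots> = (1 / (c * kk \<tau> \<beta> 0)) *\<^sub>R (c *\<^sub>R S 0 y - A (S 0 y))" using comm y by simp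
    also have "\<dots> = y" using S0 cpos kb0pos by simp
    finally show "R0 (c *\<^sub>R y - A y) = y" .
  qed
  have G: "resolvent_op D A c = R0"
    unfolding resolvent_op_def by (rule the_equality[where P="is_inverse_of_shift D A c", OF inv0]) (rule inv_unique[OF inv0])
  define T where "T = R_tau \<tau> \<alpha> D A"
  have Tdef: "T x = (1 / kk \<tau> \<beta> 0) *\<^sub>R S 0 x" for x
    unfolding T_def R_tau_def c_def[symmetric] G R0_def using cpos by simp
  have Tlin: "linear T" unfolding Tdef[abs_def]
    by (rule bounded_linear.linear, rule bounded_linear_const_scaleR[OF bl])
  have TA: "T (A z) = c *\<^sub>R T z - c *\<^sub>R z" if "z \<in> D" for z
  proof -
    have "T (A z) = (1 / kk \<tau> \<beta> 0) *\<^sub>R A (S 0 z)" unfolding Tdef using comm that by simp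
    also have "A (S 0 z) = c *\<^sub>R S 0 z - (c * kk \<tau> \<beta> 0) *\<^sub>R z" using S0[of z] by (simp add: algebra_simps)
    finally show ?thesis unfolding Tdef using kb0pos by (simp add: algebra_simps)
  qed
  have rec: "S n x = kk \<tau> \<beta> n *\<^sub>R T x + (\<Sum>j<n. (kk \<tau> \<alpha> (n-j) / kk \<tau> \<alpha> 0) *\<^sub>R (T (S j x) - S j x))" for n x
  proof -
    define y where "y = kk \<tau> \<beta> n *\<^sub>R x + \<tau> *\<^sub>R (\<Sum>j<n. kk \<tau> \<alpha> (n-j) *\<^sub>R A (S j x))"
    have "c *\<^sub>R S n x = T (c *\<^sub>R S n x - A (S n x))"
      using TA[OF inD[of n x]] Tlin by (simp add: linear_diff linear_scale)
    also have "\<dots> = c *\<^sub>R T y" using step[of n x] Tlin by (simp add: y_def linear_scale)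
    finally have "S n x = T y" using cpos by simp
    also have "\<dots> = kk \<tau> \<beta> n *\<^sub>R T x + \<tau> *\<^sub>R (\<Sum>j<n. kk \<tau> \<alpha> (n-j) *\<^sub>R T (A (S j x)))"
      unfolding y_def using Tlin by (simp add: linear_add linear_scale linear_sum)
    also have "\<dots> = kk \<tau> \<beta> n *\<^sub>R T x + (\<Sum>j<n. (kk \<tau> \<alpha> (n-j) / kk \<tau> \<alpha> 0) *\<^sub>R (T (S j x) - S j x))"
    proof -
      have "\<tau> *\<^sub>R (\<Sum>j<n. kk \<tau> \<alpha> (n-j) *\<^sub>R T (A (S j x)))
          = (\<Sum>j<n. (\<tau> * c * kk \<tau> \<alpha> (n-j)) *\<^sub>R (T (S j x) - S j x))"
        unfolding scaleR_sum_right
        by (rule sum.cong) (simp_all add: TA[OF inD] scaleR_diff_right mult_ac)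
      also have "\<dots> = (\<Sum>j<n. (kk \<tau> \<alpha> (n-j) / kk \<tau> \<alpha> 0) *\<^sub>R (T (S j x) - S j x))"
      proof -
        have tc: "\<tau> * c = 1 / kk \<tau> \<alpha> 0" using ck k0pos by (simp add: field_simps)
        show ?thesis by (rule sum.cong) (simp_all add: tc)
      qed
      finally show ?thesis by simp
    qed
    finally show ?thesis .
  qed
  let ?f = "acoef \<tau> \<alpha> \<beta>"
  have k0ne: "kk \<tau> \<alpha> 0 \<noteq> 0" using k0pos by simp
  have main: "\<forall>x M. n + 1 \<le> M \<longrightarrow> S n x = (\<Sum>l\<le>M. ?f n l *\<^sub>R (T ^^ l) x)" for n
  proof (induction n rule: less_induct)
    case (less n)
    have IH: "S j x = (\<Sum>l\<le>M. ?f j l *\<^sub>R (T ^^ l) x)" if "j < n" "j + 1 \<le> M" for j x M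
      using less that by blast
    have base: "S n x = (\<Sum>l\<le>n+1. ?f n l *\<^sub>R (T ^^ l) x)" for x
    proof -
      have e1: "T (S j x) - S j x = (\<Sum>l\<le>n+1. ((if l = 0 then 0 else ?f j (l-1)) - ?f j l) *\<^sub>R (T ^^ l) x)"
        if j: "j < n" for j
      proof -
        have "T (S j x) = T (\<Sum>l\<le>n. ?f j l *\<^sub>R (T ^^ l) x)" using IH[of j n] j by simp
        also have "\<dots> = (\<Sum>l\<le>n. ?f j l *\<^sub>R (T ^^ Suc l) x)"
          using Tlin by (simp add: linear_sum linear_scale)
        also have "\<dots> = (\<Sum>l\<le>n+1. (if l = 0 then 0 else ?f j (l-1)) *\<^sub>R (T ^^ l) x)"
          unfolding Suc_eq_plus1[symmetric] sum.atMost_Suc_shift by simp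
        finally have a: "T (S j x) = \<dots>" .
        have b: "S j x = (\<Sum>l\<le>n+1. ?f j l *\<^sub>R (T ^^ l) x)" using IH[of j "n+1"] j by simp
        show ?thesis by (subst a, subst b) (simp only: sum_subtractf[symmetric] scaleR_diff_left)
      qed
      have "S n x = kk \<tau> \<beta> n *\<^sub>R T x + (\<Sum>j<n. (kk \<tau> \<alpha> (n-j) / kk \<tau> \<alpha> 0) *\<^sub>R
            (\<Sum>l\<le>n+1. ((if l = 0 then 0 else ?f j (l-1)) - ?f j l) *\<^sub>R (T ^^ l) x))"
        using rec[of n x] e1 by simp
      also have "\<dots> = (\<Sum>l\<le>n+1. (if l = 1 then kk \<tau> \<beta> n else 0) *\<^sub>R (T ^^ l) x)
          + (\<Sum>l\<le>n+1. (\<Sum>j<n. kk \<tau> \<alpha> (n-j) / kk \<tau> \<alpha> 0 *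
               ((if l = 0 then 0 else ?f j (l-1)) - ?f j l)) *\<^sub>R (T ^^ l) x)"
      proof -
        have p1: "(\<Sum>l\<le>n+1. (if l = 1 then kk \<tau> \<beta> n else 0) *\<^sub>R (T ^^ l) x) = kk \<tau> \<beta> n *\<^sub>R T x"
        proof -
          have "(\<Sum>l\<le>n+1. (if l = 1 then kk \<tau> \<beta> n else 0) *\<^sub>R (T ^^ l) x)
              = (\<Sum>l\<le>n+1. if l = 1 then kk \<tau> \<beta> n *\<^sub>R (T ^^ l) x else 0)"
            by (rule sum.cong) auto
          also have "\<dots> = kk \<tau> \<beta> n *\<^sub>R T x" by (simp add: sum.delta)
          finally show ?thesis .
        qed
        have p2: "(\<Sum>j<n. (kk \<tau> \<alpha> (n-j) / kk \<tau> \<alpha> 0) *\<^sub>R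
            (\<Sum>l\<le>n+1. ((if l = 0 then 0 else ?f j (l-1)) - ?f j l) *\<^sub>R (T ^^ l) x))
          = (\<Sum>l\<le>n+1. (\<Sum>j<n. kk \<tau> \<alpha> (n-j) / kk \<tau> \<alpha> 0 *
               ((if l = 0 then 0 else ?f j (l-1)) - ?f j l)) *\<^sub>R (T ^^ l) x)"
          unfolding scaleR_sum_right scaleR_sum_left scaleR_scaleR
          by (rule sum.swap)
        show ?thesis unfolding p1 p2 ..
      qed
      also have "\<dots> = (\<Sum>l\<le>n+1. ?f n l *\<^sub>R (T ^^ l) x)"
        unfolding sum.distrib[symmetric] scaleR_add_left[symmetric]
        by (rule sum.cong[OF refl]) (metis coef[OF k0ne])
      finally show ?thesis .
    qed
    show ?case
    proof (intro allI impI)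
      fix x M assume M: "n + 1 \<le> M"
      have "(\<Sum>l\<le>n+1. ?f n l *\<^sub>R (T ^^ l) x) = (\<Sum>l\<le>M. ?f n l *\<^sub>R (T ^^ l) x)"
        by (rule sum.mono_neutral_left) (use M in \<open>auto simp: acoef_zero\<close>)
      then show "S n x = (\<Sum>l\<le>M. ?f n l *\<^sub>R (T ^^ l) x)" using base by simp
    qed
  qed
  have r0: "in_resolvent_set D A (\<tau> powr (-\<alpha>))"
    unfolding in_resolvent_set_def c_def[symmetric] using inv0 by blast
  have r1: "S 0 x = ?f 0 1 *\<^sub>R T x" for x
  proof -
    have "S 0 x = (\<Sum>l\<le>1. ?f 0 l *\<^sub>R (T ^^ l) x)" using main[of 0, rule_format, of 1 x] by simp
    then show ?thesis by (simp add: acoef_zero)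
  qed
  have r2: "S 1 x = ?f 1 1 *\<^sub>R T x + ?f 1 2 *\<^sub>R (T ^^ 2) x" for x
  proof -
    have "S 1 x = (\<Sum>l\<le>2. ?f 1 l *\<^sub>R (T ^^ l) x)" using main[of 1, rule_format, of 2 x] by simp
    also have "{..2::nat} = {0, 1, 2}" by auto
    finally show ?thesis by (simp add: acoef_zero)
  qed
  have r3: "S n x = (\<Sum>j=1..n+1. ?f n j *\<^sub>R (T ^^ j) x)" for n x
  proof -
    have "S n x = (\<Sum>l\<le>n+1. ?f n l *\<^sub>R (T ^^ l) x)" using main[of n, rule_format, of "n+1" x] by simp
    also have "\<dots> = (\<Sum>l=0..n+1. ?f n l *\<^sub>R (T ^^ l) x)" by (simp add: atMost_atLeast0)
    also have "\<dots> = ?f n 0 *\<^sub>R (T ^^ 0) x + (\<Sum>l=1..n+1. ?f n l *\<^sub>R (T ^^ l) x)"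
      by (subst sum.atLeast_Suc_atMost) simp_all
    finally show ?thesis by (simp add: acoef_zero)
  qed
  show ?thesis using r0 r1 r2 r3 unfolding T_def by blast
qed

end
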